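(* Let $q$ be a prime power and $1\leqslant s\leqslant q-1$. In the polynomial ring $\mathbb{F}_q[x_1,x_2,y_1,y_2]$ (or its fraction field) the following two identities hold: $$h_{s}\cdot (d_{2}^{*})^{s}=c_{1}^{*}\cdot u_{1}^{s}+u_{-1}^{q-s}\cdot u_{0}\cdot\sum_{i=1}^s (-1)^i\binom{s}{i} (u_{-1} u_{1})^{s-i}(u_{0}^{q+1})^{i-1},$$ $$h_{q-1-s}\cdot d_{2}^{s}=c_{1}\cdot u_{-1}^{s}+u_{0}\cdot u_{1}^{q-s}\cdot\sum_{i=1}^s (-1)^i\binom{s}{i} (u_{-1} u_{1})^{s-i}(u_{0}^{q+1})^{i-1}.$$
   Context: $\mathbb{F}_q$ is the finite field with $q=p^m$ elements. In $\mathbb{F}_q[x_1,x_2,y_1,y_2]$ let $*$ be the $\mathbb{F}_q$-algebra involution with $x_1\mapsto y_2$, $x_2\mapsto y_1$, $y_1\mapsto x_2$, $y_2\mapsto x_1$; write $f^*$ for the image of $f$. Define $d_2:=x_1x_2^q-x_2x_1^q$, $d_1:=x_1x_2^{q^2}-x_2x_1^{q^2}$, $c_0:=d_2^{q-1}$, $c_1:=d_1/d_2$ (a polynomial), and $c_0^*,c_1^*,d_2^*$ their images under $*$. Define $u_0:=x_1y_1+x_2y_2$, $u_1:=x_1^qy_1+x_2^qy_2$, $u_{-1}:=x_1y_1^q+x_2y_2^q$. For $0\leqslant s\leqslant q-1$ define $$h_s:=\frac{u_1^{s+1}(d_2^* )^{q-1-s}+u_{-1}^{q-s}d_2^{s}}{u_0^{q}}.$$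 (One has $h_0=c_1^*$, $h_{q-1}=c_1$, $h_s^*=h_{q-1-s}$.) *)

theory Defs
  imports "HOL-Computational_Algebra.Polynomial_Factorial" "HOL-Library.Cardinality"
begin

text \<open>The polynomial ring F_q[x1,x2,y1,y2] is rendered as the nested polynomial ring
  ('a poly poly poly poly) over a finite field 'a with q = CARD('a) elements.
  Variable order (outermost to innermost): x1, x2, y1, y2.\<close>

type_synonym 'a mpoly4 = "'a poly poly poly poly"

definition X1 :: "'a::comm_ring_1 mpoly4" where "X1 = [:0, 1:]"
definition X2 :: "'a::comm_ring_1 mpoly4" where "X2 = [:[:0, 1:]:]"
definition Y1 :: "'a::comm_ring_1 mpoly4" where "Y1 = [:[:[:0, 1:]:]:]"
definition Y2 :: "'a::comm_ring_1 mpoly4" where "Y2 = [:[:[:[:0, 1:]:]:]:]"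

text \<open>Substitution x1:=a, x2:=b, y1:=c, y2:=d (an F_q-algebra homomorphism).\<close>
definition subst4 :: "'a::comm_ring_1 mpoly4 \<Rightarrow> 'a mpoly4 \<Rightarrow> 'a mpoly4 \<Rightarrow> 'a mpoly4
    \<Rightarrow> 'a mpoly4 \<Rightarrow> 'a mpoly4" where
  "subst4 a b c d f =
     poly (map_poly (\<lambda>g. poly (map_poly (\<lambda>h. poly (map_poly (\<lambda>k.
        poly (map_poly (\<lambda>e. [:[:[:[:e:]:]:]:]) k) d) h) c) g) b) f) a"

definition star :: "'a::comm_ring_1 mpoly4 \<Rightarrow> 'a mpoly4" where
  "star f = subst4 Y2 Y1 X2 X1 f"

definition d2 :: "'a::{field,finite} mpoly4" where
  "d2 = X1 * X2 ^ (CARD('a)) - X2 * X1 ^ (CARD('a))"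

definition d1 :: "'a::{field,finite} mpoly4" where
  "d1 = X1 * X2 ^ (CARD('a)^2) - X2 * X1 ^ (CARD('a)^2)"

text \<open>c1 = d1/d2, which is a polynomial (exact division in the polynomial ring).\<close>
definition c1 :: "'a::{field,finite} mpoly4" where
  "c1 = d1 div d2"

definition u0 :: "'a::{field,finite} mpoly4" where
  "u0 = X1 * Y1 + X2 * Y2"

definition u1 :: "'a::{field,finite} mpoly4" where
  "u1 = X1 ^ (CARD('a)) * Y1 + X2 ^ (CARD('a)) * Y2"

definition um1 :: "'a::{field,finite} mpoly4" where
  "um1 = X1 * Y1 ^ (CARD('a)) + X2 * Y2 ^ (CARD('a))"

definition h :: "nat \<Rightarrow> 'a::{field,finite} mpoly4 fract" where
  "h s = to_fract (u1 ^ (s + 1) * (star d2) ^ (CARD('a) - 1 - s) + um1 ^ (CARD('a) - s) * d2 ^ s)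
         / to_fract (u0 ^ (CARD('a)))"

end

theory Submission
  imports Defs
begin

lemma ff_pow_card:
  fixes x :: "'a :: {field,finite}"
  shows "x ^ CARD('a) = x"
proof (cases "x = 0")
  case False
  have "x * (\<Prod>y\<in>UNIV-{0}. x * y) = x * x ^ (card (UNIV :: 'a set) - 1) * \<Prod>(UNIV-{0})"
    by (simp add: prod.distrib mult_ac)
  also have "x * x ^ (card (UNIV :: 'a set) - 1) = x ^ Suc (card (UNIV :: 'a set) - 1)"
    by (subst power_Suc) auto
  also have "Suc (card (UNIV :: 'a set) - 1) = card (UNIV :: 'a set)"
    using finite_UNIV_card_ge_0[where ?'a = 'a] by simp
  also have "(\<Prod>y\<in>UNIV-{0}. x * y) = (\<Prod>y\<in>UNIV-{0}. y)"
    by (rule prod.reindex_bij_witness[of _ "\<lambda>y. y / x" "\<lambda>y. x * y"]) (use False in auto)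
  finally show ?thesis
    by simp
qed (use finite_UNIV_card_ge_0[where ?'a = 'a] in auto)

lemma card_ge2: "CARD('a :: {field,finite}) \<ge> 2"
proof -
  have "{0, 1::'a} \<subseteq> UNIV" by auto
  hence "card {0,1::'a} \<le> CARD('a)" by (intro card_mono) auto
  thus ?thesis by simp
qed

lemma choose_vanish:
  assumes "0 < k" "k < CARD('a :: {field,finite})"
  shows "of_nat (CARD('a) choose k) = (0::'a)"
proof -
  let ?q = "CARD('a)"
  have q1: "?q \<ge> 1" using card_ge2[where 'a='a] by simp
  have eq: "[:1, 1::'a:] ^ ?q = monom 1 ?q + 1"
  proof (rule poly_eqI_degree_lead_coeff[where n = ?q and A = UNIV])
    show "coeff ([:1, 1::'a:] ^ ?q) ?q = coeff (monom 1 ?q + 1) ?q"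
      using q1 by (simp add: coeff_linear_power)
    show "card (UNIV::'a set) \<ge> ?q" by simp
    show "degree ([:1, 1::'a:] ^ ?q) \<le> ?q"
      by (metis degree_linear_power order_refl)
    show "degree (monom (1::'a) ?q + 1) \<le> ?q"
      using q1 by (intro degree_add_le) (auto simp: degree_monom_le)
    fix z :: 'a
    show "poly ([:1, 1:] ^ ?q) z = poly (monom 1 ?q + 1) z"
      by (simp add: poly_monom ff_pow_card add.commute)
  qed
  have "coeff ([:1, 1::'a:] ^ ?q) k = coeff (monom 1 ?q + 1) k" by (simp only: eq)
  thus ?thesis using assms
    by (simp add: coeff_linear_poly_power coeff_monom)
qed

lemma of_nat_poly_zero: "of_nat n = (0::'a::comm_semiring_1) \<Longrightarrow> of_nat n = (0::'a poly)"
  by (simp add: of_nat_eq_0_iff_char_dvd)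

lemma choose_vanish4:
  assumes "0 < k" "k < CARD('a :: {field,finite})"
  shows "of_nat (CARD('a) choose k) = (0::'a mpoly4)"
  using choose_vanish[OF assms] by (intro of_nat_poly_zero)

lemma frob_add:
  fixes x y :: "'b::comm_ring_1"
  assumes H: "\<And>k. 0 < k \<Longrightarrow> k < n \<Longrightarrow> of_nat (n choose k) = (0::'b)" and n: "n > 0"
  shows "(x + y) ^ n = x ^ n + y ^ n"
proof -
  have "(x + y) ^ n = (\<Sum>k\<le>n. of_nat (n choose k) * x ^ k * y ^ (n - k))"
    by (rule binomial_ring)
  also have "\<dots> = (\<Sum>k\<in>{0,n}. of_nat (n choose k) * x ^ k * y ^ (n - k))"
  proof (intro sum.mono_neutral_right ballI)
    fix k assume "k \<in> {..n} - {0, n}"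
    hence k: "k > 0" "k < n" by auto
    thus "of_nat (n choose k) * x ^ k * y ^ (n - k) = 0" using H by simp
  qed auto
  finally show ?thesis using n by (simp add: add_ac)
qed

lemma frob_diff:
  fixes x y :: "'b::comm_ring_1"
  assumes H: "\<And>k. 0 < k \<Longrightarrow> k < n \<Longrightarrow> of_nat (n choose k) = (0::'b)" and n: "n > 0"
  shows "(x - y) ^ n = x ^ n - y ^ n"
proof -
  have m1: "(-1::'b) ^ n = -1"
  proof -
    have "(1 + (-1::'b)) ^ n = 1 ^ n + (-1) ^ n" by (rule frob_add[OF H n])
    hence "0 = 1 + (-1::'b) ^ n" using n by (simp add: power_0_left)
    thus ?thesis by (simp add: eq_neg_iff_add_eq_0 add.commute)
  qed
  have "(x - y) ^ n = x ^ n + (-y) ^ n" using frob_add[OF H n, of x "-y"] by simp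
  also have "(-y) ^ n = - (y ^ n)"
  proof -
    have "(-y) ^ n = ((-1) * y) ^ n" by simp
    also have "\<dots> = (-1) ^ n * y ^ n" by (rule power_mult_distrib)
    finally show ?thesis by (simp add: m1)
  qed
  finally show ?thesis by simp
qed


definition rh :: "('b::comm_ring_1 \<Rightarrow> 'c::comm_ring_1) \<Rightarrow> bool" where
  "rh F \<longleftrightarrow> F 0 = 0 \<and> F 1 = 1 \<and> (\<forall>x y. F (x + y) = F x + F y) \<and> (\<forall>x y. F (x * y) = F x * F y)"

lemma rh_minus: assumes "rh F" shows "F (- x) = - F x"
proof -
  have "F (x + - x) = F x + F (-x)" using assms unfolding rh_def by blast
  thus ?thesis using assms unfolding rh_def by (simp add: eq_neg_iff_add_eq_0 add.commute)
qed

lemma rh_diff: assumes "rh F" shows "F (x - y) = F x - F y"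
  using rh_minus[OF assms, of y] assms unfolding rh_def
  by (metis diff_conv_add_uminus)

lemma rh_power: assumes "rh F" shows "F (x ^ n) = F x ^ n"
  using assms unfolding rh_def by (induction n) auto

lemma rh_simps:
  assumes "rh F"
  shows "F (x + y) = F x + F y" "F (x * y) = F x * F y" "F 0 = 0" "F 1 = 1"
  using assms unfolding rh_def by auto

lemma map_poly_add_rh:
  assumes "rh F" shows "map_poly F (p + q) = map_poly F p + map_poly F q"
  by (rule poly_eqI) (simp add: coeff_map_poly rh_simps[OF assms])

lemma map_poly_smult_rh:
  assumes "rh F" shows "map_poly F (smult a q) = smult (F a) (map_poly F q)"
  by (rule poly_eqI) (simp add: coeff_map_poly rh_simps[OF assms])

lemma map_poly_mult_rh:
  assumes "rh F" shows "map_poly F (p * q) = map_poly F p * map_poly F q"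
proof (induction p)
  case 0
  then show ?case by simp
next
  case (pCons a p)
  have "map_poly F (pCons a p * q) = map_poly F (smult a q + pCons 0 (p * q))" by simp
  also have "\<dots> = smult (F a) (map_poly F q) + pCons 0 (map_poly F p * map_poly F q)"
    by (simp add: map_poly_add_rh[OF assms] map_poly_smult_rh[OF assms] map_poly_pCons
        rh_simps[OF assms] pCons.IH)
  also have "\<dots> = map_poly F (pCons a p) * map_poly F q"
    by (simp add: map_poly_pCons rh_simps[OF assms])
  finally show ?case .
qed

lemma rh_eval:
  assumes "rh F" shows "rh (\<lambda>p. poly (map_poly F p) x)"
  unfolding rh_def
  by (simp add: map_poly_add_rh[OF assms] map_poly_mult_rh[OF assms] rh_simps[OF assms])

lemma rh_const4: "rh (\<lambda>e::'b::comm_ring_1. [:[:[:[:e:]:]:]:])"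
  unfolding rh_def by (simp add: one_pCons)

lemma rh_subst4: "rh (subst4 a b c d)"
  unfolding subst4_def[abs_def]
  by (intro rh_eval rh_const4)

lemma rh_star: "rh star"
  unfolding star_def[abs_def] by (rule rh_subst4)

lemma star_X: "star X1 = (Y2 :: 'a::comm_ring_1 mpoly4)" "star X2 = (Y1 :: 'a mpoly4)"
   "star Y1 = (X2 :: 'a mpoly4)" "star Y2 = (X1 :: 'a mpoly4)"
  by (simp_all add: star_def subst4_def X1_def X2_def Y1_def Y2_def map_poly_pCons one_pCons map_poly_1)


lemma const_pow: "[:c:] ^ n = [:c ^ n:]"
  by (induction n) (auto simp: one_pCons mult.commute)

lemma X1_pow_coeff1: "n \<ge> 2 \<Longrightarrow> coeff ([:0, 1::'b::comm_semiring_1:] ^ n) (Suc 0) = 0"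
  by (subst coeff_linear_poly_power) (auto simp: power_0_left)

lemma d2_nz: "(d2 :: 'a::{field,finite} mpoly4) \<noteq> 0"
proof
  assume "(d2 :: 'a mpoly4) = 0"
  hence "coeff (d2 :: 'a mpoly4) 1 = 0" by simp
  moreover have "coeff (d2 :: 'a mpoly4) 1 = [:0,1:] ^ CARD('a)"
    using card_ge2[where 'a='a]
    by (simp add: d2_def X1_def X2_def const_pow X1_pow_coeff1)
  ultimately show False by simp
qed

lemma u0_nz: "(u0 :: 'a::{field,finite} mpoly4) \<noteq> 0"
proof
  assume "(u0 :: 'a mpoly4) = 0"
  hence "coeff (u0 :: 'a mpoly4) 1 = 0" by simp
  moreover have "coeff (u0 :: 'a mpoly4) 1 = [:[:0,1:]:]"
    by (simp add: u0_def X1_def X2_def Y1_def Y2_def)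
  ultimately show False by simp
qed

lemma frob4:
  fixes x y :: "'a::{field,finite} mpoly4"
  shows "(x + y) ^ CARD('a) = x ^ CARD('a) + y ^ CARD('a)"
    and "(x - y) ^ CARD('a) = x ^ CARD('a) - y ^ CARD('a)"
  using card_ge2[where 'a='a]
  by (auto intro!: frob_add frob_diff choose_vanish4)

definition cexp :: "'a::{field,finite} mpoly4" where
  "cexp = (\<Sum>i<CARD('a)+1. (X1 ^ (CARD('a)-1)) ^ (CARD('a) + 1 - Suc i) * (X2 ^ (CARD('a)-1)) ^ i)"

lemma d1_eq: "(d1 :: 'a::{field,finite} mpoly4) = d2 * cexp"
proof -
  let ?q = "CARD('a)"
  let ?T = "X2 ^ (?q - 1) :: 'a mpoly4" and ?S = "X1 ^ (?q - 1) :: 'a mpoly4"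
  have q1: "?q \<ge> 1" using card_ge2[where 'a='a] by simp
  have e1: "?q ^ 2 = Suc ((?q - 1) * (?q + 1))" using q1
    by (cases ?q) (auto simp: power2_eq_square)
  have e2: "?q = Suc (?q - 1)" using q1 by simp
  have a1: "(X2::'a mpoly4) ^ (?q^2) = X2 * ?T^(?q+1)"
    by (simp only: e1 power_Suc power_mult)
  have a2: "(X1::'a mpoly4) ^ (?q^2) = X1 * ?S^(?q+1)"
    by (simp only: e1 power_Suc power_mult)
  have a3: "(X2::'a mpoly4) ^ ?q = X2 * ?T"
    by (subst e2) (simp only: power_Suc diff_Suc_1)
  have a4: "(X1::'a mpoly4) ^ ?q = X1 * ?S"
    by (subst e2) (simp only: power_Suc diff_Suc_1)
  have "(d1 :: 'a mpoly4) = X1 * X2 * (?T ^ (?q + 1) - ?S ^ (?q + 1))"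
    unfolding d1_def a1 a2 by (simp add: algebra_simps)
  also have "?T ^ (?q + 1) - ?S ^ (?q + 1) = (?T - ?S) * cexp"
    unfolding cexp_def by (rule power_diff_sumr2)
  also have "X1 * X2 * ((?T - ?S) * cexp) = (X1 * X2 * (?T - ?S)) * cexp" by simp
  also have "X1 * X2 * (?T - ?S) = d2"
    unfolding d2_def a3 a4 by (simp add: algebra_simps)
  finally show ?thesis .
qed

lemma c1_d2: "(c1 :: 'a::{field,finite} mpoly4) * d2 = d1"
  unfolding c1_def d1_eq using d2_nz by simp

lemma E1_abs:
  fixes x1 x2 A1 A2 B1 B2 C1 C2 :: "'b::comm_ring_1"
  shows "(x1*C1 + x2*C2)*(A1*B2 - A2*B1) + (B1*C1 + B2*C2)*(x1*A2 - x2*A1) = (x1*B2 - x2*B1)*(A1*C1+A2*C2)"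
  by (simp add: algebra_simps)

lemma E1: "(um1 :: 'a::{field,finite} mpoly4) * d2 ^ CARD('a) + u1 ^ CARD('a) * d2 = d1 * u0 ^ CARD('a)"
proof -
  let ?q = "CARD('a)"
  have f1: "d2 ^ ?q = (X1::'a mpoly4) ^ ?q * (X2 ^ ?q) ^ ?q - X2 ^ ?q * (X1 ^ ?q) ^ ?q"
    unfolding d2_def by (simp add: frob4 power_mult_distrib)
  have f2: "u1 ^ ?q = ((X1::'a mpoly4) ^ ?q) ^ ?q * Y1 ^ ?q + (X2 ^ ?q) ^ ?q * Y2 ^ ?q"
    unfolding u1_def by (simp add: frob4 power_mult_distrib)
  have f3: "u0 ^ ?q = (X1::'a mpoly4) ^ ?q * Y1 ^ ?q + X2 ^ ?q * Y2 ^ ?q"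
    unfolding u0_def by (simp add: frob4 power_mult_distrib)
  have f4: "(d1::'a mpoly4) = X1 * (X2 ^ ?q) ^ ?q - X2 * (X1 ^ ?q) ^ ?q"
    unfolding d1_def by (simp add: power_mult[symmetric] power2_eq_square)
  show ?thesis unfolding f1 f2 f3 f4 unfolding um1_def d2_def
    by (rule E1_abs)
qed


lemma BS:
  fixes A B :: "'b::comm_ring_1"
  shows "B * (\<Sum>i=1..s. (-1) ^ i * of_nat (s choose i) * A ^ (s - i) * B ^ (i - 1)) = (A - B) ^ s - A ^ s"
proof -
  have "(A - B) ^ s = (-B + A) ^ s" by simp
  also have "\<dots> = (\<Sum>k\<le>s. of_nat (s choose k) * (-B) ^ k * A ^ (s - k))"
    by (rule binomial_ring)
  also have "{..s} = insert 0 {1..s}" by auto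
  also have "(\<Sum>k\<in>insert 0 {1..s}. of_nat (s choose k) * (-B) ^ k * A ^ (s - k)) =
      A ^ s + (\<Sum>k=1..s. of_nat (s choose k) * (-B) ^ k * A ^ (s - k))"
    by (subst sum.insert) auto
  also have "(\<Sum>k=1..s. of_nat (s choose k) * (-B) ^ k * A ^ (s - k)) =
      B * (\<Sum>i=1..s. (-1) ^ i * of_nat (s choose i) * A ^ (s - i) * B ^ (i - 1))"
    unfolding sum_distrib_left
  proof (rule sum.cong)
    fix k assume "k \<in> {1..s}"
    hence k: "k = Suc (k - 1)" by auto
    have "(-B) ^ k = (-1) ^ k * B ^ k" by (metis minus_one_mult_self mult_minus1 power_mult_distrib)
    also have "B ^ k = B * B ^ (k - 1)" by (subst k) simp
    finally show "of_nat (s choose k) * (-B) ^ k * A ^ (s - k) =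
        B * ((-1) ^ k * of_nat (s choose k) * A ^ (s - k) * B ^ (k - 1))"
      by (simp add: algebra_simps)
  qed simp
  finally show ?thesis by simp
qed

lemma main_abs:
  fixes u1 um1 u0 Q B D1 D2 C :: "'b::comm_ring_1"
  assumes s: "1 \<le> s" "s \<le> q - 1"
    and B: "B = u0 * Q"
    and h1: "um1 * u1 - B = D1 * D2"
    and h2: "u1 * D2 ^ (q - 1) + um1 ^ q = C * Q"
  shows "(u1 ^ (s + 1) * D2 ^ (q - 1 - s) + um1 ^ (q - s) * D1 ^ s) * D2 ^ s =
     (C * u1 ^ s + um1 ^ (q - s) * u0 *
       (\<Sum>i=1..s. (-1) ^ i * of_nat (s choose i) * (um1 * u1) ^ (s - i) * B ^ (i - 1))) * Q"
proof -
  let ?S = "(\<Sum>i=1..s. (-1) ^ i * of_nat (s choose i) * (um1 * u1) ^ (s - i) * B ^ (i - 1))"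
  have e1: "D2 ^ (q - 1 - s) * D2 ^ s = D2 ^ (q - 1)"
    using s by (simp flip: power_add)
  have e2: "um1 ^ q = um1 ^ (q - s) * um1 ^ s"
    using s by (simp flip: power_add)
  have bs: "B * ?S = (D1 * D2) ^ s - (um1 * u1) ^ s"
    using BS[of B s "um1 * u1"] h1 by simp
  have "(u1 ^ (s + 1) * D2 ^ (q - 1 - s) + um1 ^ (q - s) * D1 ^ s) * D2 ^ s =
      u1 ^ s * (u1 * (D2 ^ (q - 1 - s) * D2 ^ s)) + um1 ^ (q - s) * (D1 ^ s * D2 ^ s)"
    by (simp add: algebra_simps)
  also have "\<dots> = u1 ^ s * (u1 * D2 ^ (q - 1)) + um1 ^ (q - s) * (D1 * D2) ^ s"
    by (simp only: e1 power_mult_distrib)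
  also have "\<dots> = u1 ^ s * (C * Q - um1 ^ q) + um1 ^ (q - s) * ((D1 * D2) ^ s)"
    using h2 by (metis add_diff_cancel_right')
  also have "\<dots> = u1 ^ s * (C * Q) + um1 ^ (q - s) * ((D1 * D2) ^ s - (um1 * u1) ^ s)"
    by (simp add: e2 power_mult_distrib algebra_simps)
  also have "\<dots> = u1 ^ s * (C * Q) + um1 ^ (q - s) * (B * ?S)"
    by (simp only: bs)
  also have "\<dots> = (C * u1 ^ s + um1 ^ (q - s) * u0 * ?S) * Q"
    by (simp add: B algebra_simps)
  finally show ?thesis .
qed

lemma F2: "(um1 :: 'a::{field,finite} mpoly4) * d2 ^ (CARD('a) - 1) + u1 ^ CARD('a) = c1 * u0 ^ CARD('a)"
proof -
  let ?q = "CARD('a)"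
  have e: "(d2::'a mpoly4) ^ ?q = d2 * d2 ^ (?q - 1)"
    using card_ge2[where 'a='a] by (simp flip: power_Suc)
  have "d2 * (um1 * d2 ^ (?q - 1) + u1 ^ ?q) = d2 * ((c1 :: 'a mpoly4) * u0 ^ ?q)"
    using E1[where 'a='a] unfolding e c1_d2[symmetric] by (simp add: algebra_simps)
  thus ?thesis using d2_nz by (metis mult_left_cancel)
qed

lemma star_u: "star (um1 :: 'a::{field,finite} mpoly4) = u1" "star (u1 :: 'a mpoly4) = um1"
  "star (u0 :: 'a mpoly4) = u0"
  by (simp_all add: um1_def u1_def u0_def rh_simps[OF rh_star] rh_power[OF rh_star] star_X
     algebra_simps)

lemma F3: "(u1 :: 'a::{field,finite} mpoly4) * star d2 ^ (CARD('a) - 1) + um1 ^ CARD('a) = star c1 * u0 ^ CARD('a)"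
proof -
  have "star ((um1 :: 'a mpoly4) * d2 ^ (CARD('a) - 1) + u1 ^ CARD('a)) = star (c1 * u0 ^ CARD('a))"
    by (simp only: F2)
  thus ?thesis
    by (simp add: rh_simps[OF rh_star] rh_power[OF rh_star] star_u)
qed

lemma F1_abs:
  fixes x1 x2 y1 y2 a1 a2 c1 c2 :: "'b::comm_ring_1"
  shows "(x1*c1 + x2*c2)*(a1*y1 + a2*y2) - (x1*y1 + x2*y2)*(a1*c1 + a2*c2) = (x1*a2 - x2*a1)*(y2*c1 - y1*c2)"
  by (simp add: algebra_simps)

lemma F1: "(um1 :: 'a::{field,finite} mpoly4) * u1 - u0 * u0 ^ CARD('a) = d2 * star d2"
proof -
  let ?q = "CARD('a)"
  have f3: "u0 ^ ?q = (X1::'a mpoly4) ^ ?q * Y1 ^ ?q + X2 ^ ?q * Y2 ^ ?q"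
    unfolding u0_def by (simp add: frob4 power_mult_distrib)
  have sd: "star (d2::'a mpoly4) = Y2 * Y1 ^ ?q - Y1 * Y2 ^ ?q"
    unfolding d2_def by (simp add: rh_diff[OF rh_star] rh_simps[OF rh_star] rh_power[OF rh_star] star_X)
  show ?thesis unfolding f3 sd unfolding um1_def u1_def u0_def d2_def
    by (rule F1_abs)
qed


lemma frac_lemma:
  fixes N Q X R :: "'b::idom"
  assumes "Q \<noteq> 0" "N * X = R * Q"
  shows "to_fract N / to_fract Q * to_fract X = to_fract R"
proof -
  have "to_fract N * to_fract X = to_fract R * to_fract Q"
    using assms(2) by (metis to_fract_mult)
  thus ?thesis using assms(1) by (simp add: field_simps)
qed

theorem lemma3p1:
  fixes s :: nat
  assumes "1 \<le> s" and "s \<le> CARD('a::{field,finite}) - 1"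
  shows "(h s * to_fract ((star (d2 :: 'a mpoly4)) ^ s) =
           to_fract (star c1 * u1 ^ s + um1 ^ (CARD('a) - s) * u0 *
             (\<Sum>i=1..s. (-1) ^ i * of_nat (s choose i) * (um1 * u1) ^ (s - i)
                 * (u0 ^ (CARD('a) + 1)) ^ (i - 1)))) \<and>
         (h (CARD('a) - 1 - s) * to_fract ((d2 :: 'a mpoly4) ^ s) =
           to_fract (c1 * um1 ^ s + u0 * u1 ^ (CARD('a) - s) *
             (\<Sum>i=1..s. (-1) ^ i * of_nat (s choose i) * (um1 * u1) ^ (s - i)
                 * (u0 ^ (CARD('a) + 1)) ^ (i - 1))))"
proof
  let ?q = "CARD('a)"
  have Qnz: "(u0::'a mpoly4) ^ ?q \<noteq> 0" using u0_nz by simp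
  have B: "(u0::'a mpoly4) ^ (?q + 1) = u0 * u0 ^ ?q" by simp
  show "h s * to_fract ((star (d2 :: 'a mpoly4)) ^ s) =
           to_fract (star c1 * u1 ^ s + um1 ^ (CARD('a) - s) * u0 *
             (\<Sum>i=1..s. (-1) ^ i * of_nat (s choose i) * (um1 * u1) ^ (s - i)
                 * (u0 ^ (CARD('a) + 1)) ^ (i - 1)))"
    unfolding h_def
    by (rule frac_lemma[OF Qnz], rule main_abs[OF assms B])
       (use F1[where 'a='a] F3[where 'a='a] B in auto)
  have n1: "?q - 1 - s + 1 = ?q - s" "?q - 1 - (?q - 1 - s) = s" "?q - (?q - 1 - s) = s + 1"
    using assms by auto
  show "h (CARD('a) - 1 - s) * to_fract ((d2 :: 'a mpoly4) ^ s) =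
           to_fract (c1 * um1 ^ s + u0 * u1 ^ (CARD('a) - s) *
             (\<Sum>i=1..s. (-1) ^ i * of_nat (s choose i) * (um1 * u1) ^ (s - i)
                 * (u0 ^ (CARD('a) + 1)) ^ (i - 1)))"
    unfolding h_def n1
  proof (rule frac_lemma[OF Qnz])
    have "(um1 ^ (s + 1) * d2 ^ (?q - 1 - s) + u1 ^ (?q - s) * star d2 ^ s) * d2 ^ s =
     (c1 * um1 ^ s + u1 ^ (?q - s) * u0 *
       (\<Sum>i=1..s. (-1) ^ i * of_nat (s choose i) * (u1 * um1) ^ (s - i) * (u0 ^ (?q + 1)) ^ (i - 1))) * (u0::'a mpoly4) ^ ?q"
      by (rule main_abs[OF assms B]) (use F1[where 'a='a] F2[where 'a='a] in \<open>auto simp: algebra_simps\<close>)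
    thus "(u1 ^ (?q - s) * star d2 ^ s + um1 ^ (s + 1) * d2 ^ (?q - 1 - s)) * d2 ^ s =
      (c1 * um1 ^ s + u0 * u1 ^ (?q - s) *
       (\<Sum>i=1..s. (-1) ^ i * of_nat (s choose i) * (um1 * u1) ^ (s - i) * (u0 ^ (?q + 1)) ^ (i - 1))) * (u0::'a mpoly4) ^ ?q"
      by (simp add: algebra_simps)
  qed
qed

end
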